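(* Let $1\le t\le k-1$ and let $x$ be the frequency vector of an $\mathrm{OA}(N,k,2,t)$ with symbols from $\{-1,1\}$. If $t$ is even, then the formulation symmetry group of ILP (M) contains (the permutations of variables induced by) $G(k)^{\rm OD}$, and for each $g\in G(k)^{\rm OD}$, $g(x)$ is the frequency vector of an $\mathrm{OA}(N,k,2,t)$ that is OD-equivalent to the one with frequency vector $x$. If $t$ is odd, then the formulation symmetry group of ILP (M) contains $G^{\rm iso}(k,2)$, and for each $g\in G^{\rm iso}(k,2)$, $g(x)$ is the frequency vector of an $\mathrm{OA}(N,k,2,t)$ isomorphic to the one with frequency vector $x$.
   Context: An $\mathrm{OA}(N,k,2,t)$ over $\{-1,1\}$ is an $N\times k$ array such that in every $N\times t$ subarray each of the $2^t$ $t$-tuples appears $N/2^t$ times. Its frequency vector is $x=(x_z)_{z\in\{-1,1\}^k}$, $x_z$ the number of rows equal to $z$. Let $Z$ be the $2^k\times k$ matrix whose rows are all vectors of $\{-1,1\}^k$, with columns $z_1,\dots,z_k$, and for $i_1<\dots<i_r$ let $z_{i_1,\dots,i_r}$ be the entrywise product $z_{i_1}\odot\cdots\odot z_{i_r}$. $M$ is the matrix whose rows are $z_{i_1,\dots,i_r}^{\top}$ for all $1\le r\le t$ and all $i_1<\dots<i_r$. ILP (M) is: minimize $\mathbf 1^{\top}x$ s.t. $\mathbf 1^{\top}x=N$, $Mx=0$, $-Mx=0$, $x\ge0$, $x\in\mathbb Z^{2^k}$. Formulation symmetry group: the set of variable permutations $\pi$ with $\pi(c)=c$ for which there exist row permutations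 of the equality and inequality systems that, together with permuting columns by $\pi$, return the same constraint matrices and right-hand sides. $G(k)^{\rm OD}$ is the group of permutations of $\{-1,1\}^k$ generated by coordinate permutations, single-coordinate sign changes, and $R_i(z_1,\dots,z_k)=(z_1z_i,\dots,z_{i-1}z_i,z_i,z_{i+1}z_i,\dots,z_kz_i)$; $G^{\rm iso}(k,2)$ is the subgroup generated by coordinate permutations and sign changes. A permutation $g$ of $\{-1,1\}^k$ acts on frequency vectors by $g(x)_{g(z)}=x_z$. Two arrays are isomorphic if the multiset of rows of one equals that of the image of the other under some element of $G^{\rm iso}(k,2)$. $X_1,X_2$ are OD-equivalent if $[\mathbf 1,X_1]$ and $[\mathbf 1,X_2]$ are related by signed permutations of rows and columns. *)

theory Defs
  imports "HOL-Combinatorics.Permutations" "HOL-Library.Multiset"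
begin

definition pm_vecs :: "nat \<Rightarrow> int list set" where
  "pm_vecs k = {z. length z = k \<and> set z \<subseteq> {-1, 1}}"

definition is_OA :: "nat \<Rightarrow> nat \<Rightarrow> nat \<Rightarrow> int list list \<Rightarrow> bool" where
  "is_OA N k t X \<longleftrightarrow> length X = N \<and> (\<forall>r\<in>set X. r \<in> pm_vecs k) \<and>
     (\<forall>S. S \<subseteq> {..<k} \<and> card S = t \<longrightarrow>
        (\<forall>u\<in>pm_vecs k. 2 ^ t * length (filter (\<lambda>r. \<forall>i\<in>S. r ! i = u ! i) X) = N))"

definition freq :: "int list list \<Rightarrow> int list \<Rightarrow> nat" where
  "freq X z = count (mset X) z"

text \<open>Action of a permutation g of {-1,1}^k on frequency vectors: g(x)_{g(z)} = x_z.\<close>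
definition act :: "nat \<Rightarrow> (int list \<Rightarrow> int list) \<Rightarrow> (int list \<Rightarrow> nat) \<Rightarrow> int list \<Rightarrow> nat" where
  "act k g x = (\<lambda>w. if w \<in> pm_vecs k then x (the_inv_into (pm_vecs k) g w) else 0)"

definition coord_perm :: "nat \<Rightarrow> (nat \<Rightarrow> nat) \<Rightarrow> int list \<Rightarrow> int list" where
  "coord_perm k \<sigma> z = map (\<lambda>i. z ! \<sigma> i) [0..<k]"

definition sign_change :: "nat \<Rightarrow> int list \<Rightarrow> int list" where
  "sign_change i z = z[i := - (z ! i)]"

definition R_op :: "nat \<Rightarrow> nat \<Rightarrow> int list \<Rightarrow> int list" where
  "R_op k i z = map (\<lambda>j. if j = i then z ! i else z ! j * z ! i) [0..<k]"

inductive_set gen_by :: "('a \<Rightarrow> 'a) set \<Rightarrow> ('a \<Rightarrow> 'a) set" for gens where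
  gen_id: "id \<in> gen_by gens"
| gen_comp: "g \<in> gens \<Longrightarrow> h \<in> gen_by gens \<Longrightarrow> g \<circ> h \<in> gen_by gens"

definition G_iso_gens :: "nat \<Rightarrow> (int list \<Rightarrow> int list) set" where
  "G_iso_gens k = {coord_perm k \<sigma> | \<sigma>. \<sigma> permutes {..<k}} \<union> {sign_change i | i. i < k}"

definition G_OD_gens :: "nat \<Rightarrow> (int list \<Rightarrow> int list) set" where
  "G_OD_gens k = G_iso_gens k \<union> {R_op k i | i. i < k}"

definition G_iso :: "nat \<Rightarrow> (int list \<Rightarrow> int list) set" where
  "G_iso k = gen_by (G_iso_gens k)"

definition G_OD :: "nat \<Rightarrow> (int list \<Rightarrow> int list) set" where
  "G_OD k = gen_by (G_OD_gens k)"

text \<open>Rows of M: z_S for S \<subseteq> {0..k-1}, 1 \<le> |S| \<le> t. Inequality system: rows of M and -M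
  (rhs 0); equality system: the single row 1^T x = N. Objective c = 1.\<close>

definition M_row :: "nat set \<Rightarrow> int list \<Rightarrow> int" where
  "M_row S z = (\<Prod>i\<in>S. z ! i)"

definition M_subsets :: "nat \<Rightarrow> nat \<Rightarrow> nat set set" where
  "M_subsets k t = {S. S \<subseteq> {..<k} \<and> 1 \<le> card S \<and> card S \<le> t}"

definition ineq_rows :: "nat \<Rightarrow> nat \<Rightarrow> (nat set \<times> int) set" where
  "ineq_rows k t = M_subsets k t \<times> {1, -1}"

definition ineq_A :: "nat set \<times> int \<Rightarrow> int list \<Rightarrow> int" where
  "ineq_A r z = snd r * M_row (fst r) z"

definition ineq_b :: "nat set \<times> int \<Rightarrow> int" where
  "ineq_b r = 0"

definition eq_A :: "unit \<Rightarrow> int list \<Rightarrow> int" where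
  "eq_A r z = 1"

definition eq_b :: "nat \<Rightarrow> unit \<Rightarrow> int" where
  "eq_b N r = int N"

definition ilp_obj :: "int list \<Rightarrow> int" where
  "ilp_obj z = 1"

definition sys_sym :: "'v set \<Rightarrow> ('v \<Rightarrow> 'v) \<Rightarrow> 'r set \<Rightarrow> ('r \<Rightarrow> 'v \<Rightarrow> int) \<Rightarrow> ('r \<Rightarrow> int) \<Rightarrow> bool" where
  "sys_sym V \<pi> R A b \<longleftrightarrow> (\<exists>\<rho>. bij_betw \<rho> R R \<and>
      (\<forall>r\<in>R. b (\<rho> r) = b r \<and> (\<forall>z\<in>V. A (\<rho> r) (\<pi> z) = A r z)))"

definition formulation_sym :: "nat \<Rightarrow> nat \<Rightarrow> nat \<Rightarrow> (int list \<Rightarrow> int list) \<Rightarrow> bool" where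
  "formulation_sym k t N \<pi> \<longleftrightarrow> bij_betw \<pi> (pm_vecs k) (pm_vecs k) \<and>
     (\<forall>z\<in>pm_vecs k. ilp_obj (\<pi> z) = ilp_obj z) \<and>
     sys_sym (pm_vecs k) \<pi> (UNIV :: unit set) eq_A (eq_b N) \<and>
     sys_sym (pm_vecs k) \<pi> (ineq_rows k t) ineq_A ineq_b"

definition isomorphic_OA :: "nat \<Rightarrow> int list list \<Rightarrow> int list list \<Rightarrow> bool" where
  "isomorphic_OA k X Y \<longleftrightarrow> (\<exists>h\<in>G_iso k. mset Y = image_mset h (mset X))"

definition aug :: "int list list \<Rightarrow> int list list" where
  "aug X = map (\<lambda>r. 1 # r) X"

definition OD_equiv :: "nat \<Rightarrow> int list list \<Rightarrow> int list list \<Rightarrow> bool" where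
  "OD_equiv k X Y \<longleftrightarrow> length X = length Y \<and>
     (\<exists>\<rho> \<sigma> a b. \<rho> permutes {..<length X} \<and> \<sigma> permutes {..<Suc k} \<and>
        (\<forall>i<length X. a i \<in> {1, -1}) \<and> (\<forall>j<Suc k. b j \<in> {1, -1}) \<and>
        (\<forall>i<length X. \<forall>j<Suc k. aug Y ! i ! j = a i * b j * aug X ! (\<rho> i) ! (\<sigma> j)))"

end

theory Submission
  imports Defs
begin


lemma pm_vecs_iff: "z \<in> pm_vecs k \<longleftrightarrow> length z = k \<and> (\<forall>j<k. z ! j = 1 \<or> z ! j = -1)"
  unfolding pm_vecs_def by (auto simp: in_set_conv_nth subset_iff)

lemma pm_nth: "z \<in> pm_vecs k \<Longrightarrow> j < k \<Longrightarrow> z ! j = 1 \<or> z ! j = -1"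
  by (simp add: pm_vecs_iff)

lemma pm_len: "z \<in> pm_vecs k \<Longrightarrow> length z = k"
  by (simp add: pm_vecs_iff)

lemma bij_witness:
  assumes "\<And>z. z \<in> V \<Longrightarrow> f z \<in> V" "\<And>z. z \<in> V \<Longrightarrow> f' z \<in> V"
    "\<And>z. z \<in> V \<Longrightarrow> f' (f z) = z" "\<And>z. z \<in> V \<Longrightarrow> f (f' z) = z"
  shows "bij_betw f V V"
  by (rule bij_betw_byWitness[where f'=f']) (use assms in auto)

lemma len_filter_split:
  "length (filter P xs) = length (filter (\<lambda>x. P x \<and> Q x) xs) + length (filter (\<lambda>x. P x \<and> \<not> Q x) xs)"
  by (induction xs) auto

lemma sys_sym_comp:
  assumes "sys_sym V f R A b" "sys_sym V g R A b" "\<And>z. z \<in> V \<Longrightarrow> g z \<in> V"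
  shows "sys_sym V (f \<circ> g) R A b"
proof -
  obtain r1 where r1: "bij_betw r1 R R" "\<forall>r\<in>R. b (r1 r) = b r \<and> (\<forall>z\<in>V. A (r1 r) (f z) = A r z)"
    using assms(1) unfolding sys_sym_def by blast
  obtain r2 where r2: "bij_betw r2 R R" "\<forall>r\<in>R. b (r2 r) = b r \<and> (\<forall>z\<in>V. A (r2 r) (g z) = A r z)"
    using assms(2) unfolding sys_sym_def by blast
  have m: "r2 r \<in> R" if "r \<in> R" for r using r2(1) that bij_betwE by blast
  show ?thesis unfolding sys_sym_def
    apply (rule exI[of _ "r1 \<circ> r2"])
    using bij_betw_trans[OF r2(1) r1(1)] r1(2) r2(2) m assms(3) by auto
qed

lemma sys_sym_inv:
  assumes "\<And>r. r \<in> R \<Longrightarrow> \<rho> r \<in> R" "\<And>r. r \<in> R \<Longrightarrow> \<rho>' r \<in> R"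
    "\<And>r. r \<in> R \<Longrightarrow> \<rho>' (\<rho> r) = r" "\<And>r. r \<in> R \<Longrightarrow> \<rho> (\<rho>' r) = r"
    "\<And>r. r \<in> R \<Longrightarrow> b (\<rho> r) = b r" "\<And>r z. r \<in> R \<Longrightarrow> z \<in> V \<Longrightarrow> A (\<rho> r) (\<pi> z) = A r z"
  shows "sys_sym V \<pi> R A b"
  unfolding sys_sym_def using bij_witness[of R \<rho> \<rho>'] assms by blast

definition cnt :: "int list list \<Rightarrow> nat set \<Rightarrow> int list \<Rightarrow> nat" where
  "cnt X S u = length (filter (\<lambda>r. \<forall>i\<in>S. r ! i = u ! i) X)"

lemma OA_cnt: "is_OA N k t X \<Longrightarrow> S \<subseteq> {..<k} \<Longrightarrow> card S = t \<Longrightarrow> u \<in> pm_vecs k \<Longrightarrow> 2 ^ t * cnt X S u = N"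
  unfolding is_OA_def cnt_def by blast

lemma OA_rows: "is_OA N k t X \<Longrightarrow> r \<in> set X \<Longrightarrow> r \<in> pm_vecs k"
  unfolding is_OA_def by blast

lemma sc_nth: "j < length u \<Longrightarrow> sign_change i u ! j = (if j = i then - (u ! i) else u ! j)"
  unfolding sign_change_def by auto

lemma sc_pm: "u \<in> pm_vecs k \<Longrightarrow> sign_change i u \<in> pm_vecs k"
  unfolding pm_vecs_iff using sc_nth
  by (auto simp: sign_change_def nth_list_update) 

lemma sc_invol: "i < length u \<Longrightarrow> sign_change i (sign_change i u) = u"
  unfolding sign_change_def by simp

lemma flipA:
  assumes X: "is_OA N k t X" and T: "T \<subseteq> {..<k}" "card T = t + 1" and j: "j \<in> T" and u: "u \<in> pm_vecs k"
  shows "2 ^ t * (cnt X T u + cnt X T (sign_change j u)) = N"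
proof -
  have jk: "j < k" using T j by auto
  have fin: "finite T" using T(1) finite_subset by blast
  have "cnt X (T - {j}) u = cnt X T u + cnt X T (sign_change j u)"
    unfolding cnt_def
    apply (subst len_filter_split[where Q="\<lambda>r. r ! j = u ! j"])
    apply (rule arg_cong2[where f="(+)"])
    subgoal by (rule arg_cong[where f=length], rule filter_cong) (use j in auto)
    subgoal
    proof (rule arg_cong[where f=length], rule filter_cong)
      fix r assume r: "r \<in> set X"
      have rp: "r \<in> pm_vecs k" using OA_rows[OF X r] .
      have "r ! j = 1 \<or> r ! j = -1" "u ! j = 1 \<or> u ! j = -1" using pm_nth rp u jk by auto
      then have e: "r ! j \<noteq> u ! j \<longleftrightarrow> r ! j = - (u ! j)" by auto
      have ul: "length u = k" using pm_len u .
      show "((\<forall>i\<in>T - {j}. r ! i = u ! i) \<and> r ! j \<noteq> u ! j) = (\<forall>i\<in>T. r ! i = sign_change j u ! i)"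
        using e j T(1) ul by (auto simp: sc_nth subset_iff)
    qed simp
    done
  moreover have "card (T - {j}) = t" using T j fin by simp
  ultimately show ?thesis using OA_cnt[OF X _ _ u, of "T - {j}"] T by auto
qed

lemma cnt_cong: "(\<forall>j\<in>T. v ! j = u ! j) \<Longrightarrow> cnt X T v = cnt X T u"
  unfolding cnt_def by (rule arg_cong[where f=length], rule filter_cong) auto

lemma flip_parity:
  assumes X: "is_OA N k t X" and T: "T \<subseteq> {..<k}" "card T = t + 1" and E: "E \<subseteq> T" and u: "u \<in> pm_vecs k"
  shows "\<forall>v\<in>pm_vecs k. (\<forall>j\<in>T. v ! j = (if j \<in> E then - (u ! j) else u ! j)) \<longrightarrow>
     (even (card E) \<longrightarrow> cnt X T v = cnt X T u) \<and> (odd (card E) \<longrightarrow> 2 ^ t * (cnt X T u + cnt X T v) = N)"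
proof -
  have fin: "finite T" using T(1) finite_subset by blast
  have finE: "finite E" using E fin finite_subset by blast
  show ?thesis using finE E
  proof (induction E rule: finite_subset_induct)
    case empty
    then show ?case using cnt_cong by auto
  next
    case (insert x F)
    show ?case
    proof (intro ballI impI)
      fix v assume v: "v \<in> pm_vecs k" and vp: "\<forall>j\<in>T. v ! j = (if j \<in> insert x F then - u ! j else u ! j)"
      have xk: "x < k" using insert T by auto
      have vl: "length v = k" using pm_len v .
      define v' where "v' = sign_change x v"
      have v': "v' \<in> pm_vecs k" using sc_pm v v'_def by blast
      have v'p: "\<forall>j\<in>T. v' ! j = (if j \<in> F then - u ! j else u ! j)"
        using vp insert(3) xk vl T(1) unfolding v'_def by (auto simp: sc_nth subset_iff)
      have IH: "(even (card F) \<longrightarrow> cnt X T v' = cnt X T u) \<and> (odd (card F) \<longrightarrow> 2 ^ t * (cnt X T u + cnt X T v') = N)"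
        using insert(4) v' v'p by blast
      have A: "2 ^ t * (cnt X T v + cnt X T v') = N"
        using flipA[OF X T insert(2) v] unfolding v'_def .
      have c: "card (insert x F) = Suc (card F)" using insert by simp
      show "(even (card (insert x F)) \<longrightarrow> cnt X T v = cnt X T u) \<and>
         (odd (card (insert x F)) \<longrightarrow> 2 ^ t * (cnt X T u + cnt X T v) = N)"
      proof (cases "even (card F)")
        case True
        then show ?thesis using IH A c by (simp add: algebra_simps)
      next
        case False
        then have "2 ^ t * (cnt X T u + cnt X T v') = N" using IH by blast
        then have h1: "2 ^ t * cnt X T u + 2 ^ t * cnt X T v' = N" by (simp only: distrib_left)
        have h2: "2 ^ t * cnt X T v + 2 ^ t * cnt X T v' = N" using A by (simp only: distrib_left)
        from h1 h2 have "2 ^ t * cnt X T v = 2 ^ t * cnt X T u" by linarith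
        then have "cnt X T v = cnt X T u" by simp
        then show ?thesis using c False by simp
      qed
    qed
  qed
qed

lemma OA_map:
  assumes X: "is_OA N k t X" and g: "\<And>z. z \<in> pm_vecs k \<Longrightarrow> g z \<in> pm_vecs k"
    and c: "\<And>S u. S \<subseteq> {..<k} \<Longrightarrow> card S = t \<Longrightarrow> u \<in> pm_vecs k \<Longrightarrow>
       2 ^ t * length (filter (\<lambda>r. \<forall>i\<in>S. g r ! i = u ! i) X) = N"
  shows "is_OA N k t (map g X)"
  using X g c unfolding is_OA_def by (auto simp: filter_map o_def)

lemma pm1_mult: "(a::int) \<in> {1, -1} \<Longrightarrow> b \<in> {1, -1} \<Longrightarrow> a * b \<in> {1, -1}"
  by auto

lemma OD_refl: "OD_equiv k X X"
  unfolding OD_equiv_def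
  by (rule conjI[OF refl], rule exI[of _ id], rule exI[of _ id], rule exI[of _ "\<lambda>_. 1"], rule exI[of _ "\<lambda>_. 1"]) auto

lemma OD_trans:
  assumes "OD_equiv k X Y" "OD_equiv k Y Z" shows "OD_equiv k X Z"
proof -
  obtain \<rho>1 \<sigma>1 a1 b1 where 1: "length X = length Y" "\<rho>1 permutes {..<length X}" "\<sigma>1 permutes {..<Suc k}"
    "\<forall>i<length X. a1 i \<in> {1, -1}" "\<forall>j<Suc k. b1 j \<in> {1, -1}"
    "\<forall>i<length X. \<forall>j<Suc k. aug Y ! i ! j = a1 i * b1 j * aug X ! (\<rho>1 i) ! (\<sigma>1 j)"
    using assms(1) unfolding OD_equiv_def by blast
  obtain \<rho>2 \<sigma>2 a2 b2 where 2: "length Y = length Z" "\<rho>2 permutes {..<length Y}" "\<sigma>2 permutes {..<Suc k}"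
    "\<forall>i<length Y. a2 i \<in> {1, -1}" "\<forall>j<Suc k. b2 j \<in> {1, -1}"
    "\<forall>i<length Y. \<forall>j<Suc k. aug Z ! i ! j = a2 i * b2 j * aug Y ! (\<rho>2 i) ! (\<sigma>2 j)"
    using assms(2) unfolding OD_equiv_def by blast
  have r2: "\<rho>2 i < length X" if "i < length X" for i using permutes_in_image[OF 2(2)] that 1(1) by auto
  have s2: "\<sigma>2 j < Suc k" if "j < Suc k" for j using permutes_in_image[OF 2(3)] that by auto
  show ?thesis unfolding OD_equiv_def
    apply (rule conjI, use 1 2 in simp)
    apply (rule exI[of _ "\<rho>1 \<circ> \<rho>2"], rule exI[of _ "\<sigma>1 \<circ> \<sigma>2"],
        rule exI[of _ "\<lambda>i. a2 i * a1 (\<rho>2 i)"], rule exI[of _ "\<lambda>j. b2 j * b1 (\<sigma>2 j)"])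
    apply (intro conjI)
    subgoal using permutes_compose[OF 2(2)[folded 1(1)] 1(2)] by simp
    subgoal using permutes_compose[OF 2(3) 1(3)] by simp
    subgoal using 1(1,4) 2(4) r2 pm1_mult by (simp only: o_def) metis
    subgoal using 1(5) 2(5) s2 pm1_mult by metis
    subgoal using 1(1,6) 2(6) r2 s2 by (simp add: algebra_simps)
    done
qed

lemma aug_nth: "r < length X \<Longrightarrow> aug X ! r = 1 # X ! r"
  unfolding aug_def by simp

lemma aug_len[simp]: "length (aug X) = length X"
  unfolding aug_def by simp

lemma ineq_rows_fin: "(S, s) \<in> ineq_rows k t \<Longrightarrow> finite S \<and> S \<subseteq> {..<k}"
  unfolding ineq_rows_def M_subsets_def using finite_subset by auto

lemma Mrow_sc:
  assumes "finite S" "i < length z"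
  shows "M_row S (sign_change i z) = (if i \<in> S then - M_row S z else M_row S z)"
proof (cases "i \<in> S")
  case True
  have "M_row S (sign_change i z) = sign_change i z ! i * (\<Prod>j\<in>S - {i}. sign_change i z ! j)"
    unfolding M_row_def using prod.remove[OF assms(1) True] by blast
  also have "(\<Prod>j\<in>S - {i}. sign_change i z ! j) = (\<Prod>j\<in>S - {i}. z ! j)"
    by (rule prod.cong) (auto simp: sign_change_def)
  also have "sign_change i z ! i = - (z ! i)" using assms by (simp add: sign_change_def)
  finally show ?thesis using True prod.remove[OF assms(1) True, of "\<lambda>j. z ! j"] by (simp add: M_row_def)
next
  case False
  have "(\<Prod>j\<in>S. sign_change i z ! j) = (\<Prod>j\<in>S. z ! j)"
  proof (rule prod.cong[OF refl])
    fix j assume "j \<in> S" then have "j \<noteq> i" using False by blast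
    then show "sign_change i z ! j = z ! j" unfolding sign_change_def by simp
  qed
  then show ?thesis using False unfolding M_row_def by simp
qed

lemma sc_gen:
  assumes i: "i < k"
  shows "bij_betw (sign_change i) (pm_vecs k) (pm_vecs k)"
    "sys_sym (pm_vecs k) (sign_change i) (ineq_rows k t) ineq_A ineq_b"
    "is_OA N k t X \<Longrightarrow> is_OA N k t (map (sign_change i) X) \<and> OD_equiv k X (map (sign_change i) X)"
proof -
  show "bij_betw (sign_change i) (pm_vecs k) (pm_vecs k)"
    by (rule bij_witness[where f'="sign_change i"]) (use sc_pm sc_invol pm_len i in auto)
  define \<rho> where "\<rho> = (\<lambda>(S::nat set, s::int). (S, if i \<in> S then - s else s))"
  show "sys_sym (pm_vecs k) (sign_change i) (ineq_rows k t) ineq_A ineq_b"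
    apply (rule sys_sym_inv[where \<rho>=\<rho> and \<rho>'=\<rho>])
    subgoal by (auto simp: \<rho>_def ineq_rows_def split: if_splits)
    subgoal by (auto simp: \<rho>_def ineq_rows_def split: if_splits)
    subgoal for r by (cases r) (auto simp: \<rho>_def)
    subgoal for r by (cases r) (auto simp: \<rho>_def)
    subgoal by (simp add: ineq_b_def)
    subgoal for r z
      using ineq_rows_fin[of "fst r" "snd r" k t] Mrow_sc[of "fst r" i z] pm_len[of z k] i
      by (cases r) (auto simp: \<rho>_def ineq_A_def)
    done
  assume X: "is_OA N k t X"
  show "is_OA N k t (map (sign_change i) X) \<and> OD_equiv k X (map (sign_change i) X)"
  proof
    show "is_OA N k t (map (sign_change i) X)"
    proof (rule OA_map[OF X sc_pm])
      fix S u assume S: "S \<subseteq> {..<k}" "card S = t" and u: "u \<in> pm_vecs k"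
      have "length (filter (\<lambda>r. \<forall>j\<in>S. sign_change i r ! j = u ! j) X) = cnt X S (sign_change i u)"
        unfolding cnt_def
      proof (rule arg_cong[where f=length], rule filter_cong[OF refl])
        fix r assume r: "r \<in> set X"
        have rl: "length r = k" using pm_len OA_rows[OF X r] by blast
        have ul: "length u = k" using pm_len u by blast
        show "(\<forall>j\<in>S. sign_change i r ! j = u ! j) = (\<forall>j\<in>S. r ! j = sign_change i u ! j)"
          using S(1) rl ul i by (auto simp: sc_nth subset_iff)
      qed
      then show "2 ^ t * length (filter (\<lambda>r. \<forall>j\<in>S. sign_change i r ! j = u ! j) X) = N"
        using OA_cnt[OF X S sc_pm[OF u]] by simp
    qed
    show "OD_equiv k X (map (sign_change i) X)"
      unfolding OD_equiv_def
      apply (rule conjI, simp)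
      apply (rule exI[of _ id], rule exI[of _ id], rule exI[of _ "\<lambda>_. 1"], rule exI[of _ "\<lambda>j. if j = Suc i then -1 else 1"])
      apply (intro conjI, simp, simp, simp, simp)
    proof (intro allI impI)
      fix r j assume r: "r < length X" and j: "j < Suc k"
      have rl: "length (X ! r) = k" using pm_len OA_rows[OF X] r nth_mem by blast
      show "aug (map (sign_change i) X) ! r ! j =
          1 * (if j = Suc i then - 1 else 1) * aug X ! id r ! id j"
        using r j rl i by (cases j) (auto simp: aug_nth sc_nth)
    qed
  qed
qed

lemma cp_len[simp]: "length (coord_perm k \<sigma> z) = k"
  unfolding coord_perm_def by simp

lemma cp_nth: "j < k \<Longrightarrow> coord_perm k \<sigma> z ! j = z ! (\<sigma> j)"
  unfolding coord_perm_def by simp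

lemma cp_pm: "\<sigma> permutes {..<k} \<Longrightarrow> z \<in> pm_vecs k \<Longrightarrow> coord_perm k \<sigma> z \<in> pm_vecs k"
  unfolding pm_vecs_iff using permutes_in_image[of \<sigma> "{..<k}"] by (auto simp: cp_nth)

lemma cp_cp: "(\<And>j. j < k \<Longrightarrow> \<sigma> (\<tau> j) = j) \<Longrightarrow> (\<And>j. j < k \<Longrightarrow> \<tau> j < k) \<Longrightarrow> length z = k \<Longrightarrow>
   coord_perm k \<tau> (coord_perm k \<sigma> z) = z"
  by (rule nth_equalityI) (auto simp: cp_nth)

lemma Mrow_cp:
  assumes "\<sigma> permutes {..<k}" "S \<subseteq> {..<k}"
  shows "M_row S (coord_perm k \<sigma> z) = M_row (\<sigma> ` S) z"
proof -
  have "inj_on \<sigma> S" using permutes_inj[OF assms(1)] inj_on_subset by blast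
  then have "M_row (\<sigma> ` S) z = (\<Prod>j\<in>S. z ! \<sigma> j)" unfolding M_row_def by (simp add: prod.reindex)
  also have "\<dots> = M_row S (coord_perm k \<sigma> z)" unfolding M_row_def
    by (rule prod.cong) (use assms(2) in \<open>auto simp: cp_nth\<close>)
  finally show ?thesis by simp
qed

lemma cp_gen:
  assumes \<sigma>: "\<sigma> permutes {..<k}"
  shows "bij_betw (coord_perm k \<sigma>) (pm_vecs k) (pm_vecs k)"
    "sys_sym (pm_vecs k) (coord_perm k \<sigma>) (ineq_rows k t) ineq_A ineq_b"
    "is_OA N k t X \<Longrightarrow> is_OA N k t (map (coord_perm k \<sigma>) X) \<and> OD_equiv k X (map (coord_perm k \<sigma>) X)"
proof -
  have \<sigma>i: "inv \<sigma> permutes {..<k}" using permutes_inv[OF \<sigma>] .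
  have inj: "inj \<sigma>" "inj (inv \<sigma>)" using permutes_inj \<sigma> \<sigma>i by blast+
  show "bij_betw (coord_perm k \<sigma>) (pm_vecs k) (pm_vecs k)"
    by (rule bij_witness[where f'="coord_perm k (inv \<sigma>)"])
      (use cp_pm[OF \<sigma>] cp_pm[OF \<sigma>i] pm_len permutes_inverses[OF \<sigma>] permutes_in_image[OF \<sigma>] permutes_in_image[OF \<sigma>i] in \<open>auto intro!: cp_cp\<close>)
  define \<rho> where "\<rho> = (\<lambda>(S::nat set, s::int). (inv \<sigma> ` S, s))"
  define \<rho>' where "\<rho>' = (\<lambda>(S::nat set, s::int). (\<sigma> ` S, s))"
  have img: "f ` S \<subseteq> {..<k}" if "f permutes {..<k}" "S \<subseteq> {..<k}" for f S
    using permutes_in_image[OF that(1)] that(2) by auto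
  show "sys_sym (pm_vecs k) (coord_perm k \<sigma>) (ineq_rows k t) ineq_A ineq_b"
    apply (rule sys_sym_inv[where \<rho>=\<rho> and \<rho>'=\<rho>'])
    subgoal for r using img[OF \<sigma>i] card_image[OF inj_on_subset[OF inj(2)]]
      by (cases r) (auto simp: \<rho>_def ineq_rows_def M_subsets_def)
    subgoal for r using img[OF \<sigma>] card_image[OF inj_on_subset[OF inj(1)]]
      by (cases r) (auto simp: \<rho>'_def ineq_rows_def M_subsets_def)
    subgoal for r by (cases r) (auto simp: \<rho>_def \<rho>'_def image_comp permutes_inverses[OF \<sigma>])
    subgoal for r by (cases r) (auto simp: \<rho>_def \<rho>'_def image_comp permutes_inverses[OF \<sigma>])
    subgoal by (simp add: ineq_b_def)
    subgoal for r z
      using ineq_rows_fin[of "fst r" "snd r" k t] Mrow_cp[OF \<sigma>, of "inv \<sigma> ` fst r" z] img[OF \<sigma>i, of "fst r"]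
      by (cases r) (auto simp: \<rho>_def ineq_A_def image_comp permutes_inverses[OF \<sigma>])
    done
  assume X: "is_OA N k t X"
  show "is_OA N k t (map (coord_perm k \<sigma>) X) \<and> OD_equiv k X (map (coord_perm k \<sigma>) X)"
  proof
    show "is_OA N k t (map (coord_perm k \<sigma>) X)"
    proof (rule OA_map[OF X cp_pm[OF \<sigma>]])
      fix S u assume S: "S \<subseteq> {..<k}" "card S = t" and u: "u \<in> pm_vecs k"
      have S': "\<sigma> ` S \<subseteq> {..<k}" "card (\<sigma> ` S) = t"
        using img[OF \<sigma> S(1)] card_image[OF inj_on_subset[OF inj(1)]] S(2) by auto
      have "length (filter (\<lambda>r. \<forall>j\<in>S. coord_perm k \<sigma> r ! j = u ! j) X) = cnt X (\<sigma> ` S) (coord_perm k (inv \<sigma>) u)"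
        unfolding cnt_def
      proof (rule arg_cong[where f=length], rule filter_cong[OF refl])
        fix r assume r: "r \<in> set X"
        show "(\<forall>j\<in>S. coord_perm k \<sigma> r ! j = u ! j) = (\<forall>j\<in>\<sigma> ` S. r ! j = coord_perm k (inv \<sigma>) u ! j)"
          using S(1) S'(1) by (auto simp: cp_nth subset_iff permutes_inverses[OF \<sigma>])
      qed
      then show "2 ^ t * length (filter (\<lambda>r. \<forall>j\<in>S. coord_perm k \<sigma> r ! j = u ! j) X) = N"
        using OA_cnt[OF X S' cp_pm[OF \<sigma>i u]] by simp
    qed
    define \<sigma>' where "\<sigma>' = (\<lambda>j. case j of 0 \<Rightarrow> 0 | Suc m \<Rightarrow> Suc (\<sigma> m))"
    define \<tau>' where "\<tau>' = (\<lambda>j. case j of 0 \<Rightarrow> 0 | Suc m \<Rightarrow> Suc (inv \<sigma> m))"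
    have p: "\<sigma>' permutes {..<Suc k}"
    proof (rule bij_imp_permutes)
      show "bij_betw \<sigma>' {..<Suc k} {..<Suc k}"
        apply (rule bij_witness[where f'=\<tau>'])
        using permutes_in_image[OF \<sigma>] permutes_in_image[OF \<sigma>i] permutes_inverses[OF \<sigma>]
        by (auto simp: \<sigma>'_def \<tau>'_def split: nat.splits)
      show "\<sigma>' x = x" if "x \<notin> {..<Suc k}" for x
        using that permutes_not_in[OF \<sigma>] by (auto simp: \<sigma>'_def split: nat.splits)
    qed
    show "OD_equiv k X (map (coord_perm k \<sigma>) X)"
      unfolding OD_equiv_def
      apply (rule conjI, simp)
      apply (rule exI[of _ id], rule exI[of _ \<sigma>'], rule exI[of _ "\<lambda>_. 1"], rule exI[of _ "\<lambda>_. 1"])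
      apply (intro conjI, simp, rule p, simp, simp)
    proof (intro allI impI)
      fix r j assume r: "r < length X" and j: "j < Suc k"
      show "aug (map (coord_perm k \<sigma>) X) ! r ! j = 1 * 1 * aug X ! id r ! \<sigma>' j"
        using r j by (cases j) (auto simp: aug_nth cp_nth \<sigma>'_def)
    qed
  qed
qed



lemma R_len[simp]: "length (R_op k i z) = k"
  unfolding R_op_def by simp

lemma R_nth: "j < k \<Longrightarrow> R_op k i z ! j = (if j = i then z ! i else z ! j * z ! i)"
  unfolding R_op_def by simp

lemma pm1_sq: "(a::int) = 1 \<or> a = -1 \<Longrightarrow> a * a = 1"
  by auto

lemma R_pm: assumes "i < k" "z \<in> pm_vecs k" shows "R_op k i z \<in> pm_vecs k"
  unfolding pm_vecs_iff
proof (intro conjI allI impI)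
  fix j assume j: "j < k"
  have a: "z ! j \<in> {1, -1}" "z ! i \<in> {1, -1}" using pm_nth assms j by auto
  show "R_op k i z ! j = 1 \<or> R_op k i z ! j = - 1"
    using pm1_mult[OF a] a j by (auto simp: R_nth)
qed simp

lemma R_invol: "i < k \<Longrightarrow> z \<in> pm_vecs k \<Longrightarrow> R_op k i (R_op k i z) = z"
proof (rule nth_equalityI)
  assume "i < k" "z \<in> pm_vecs k"
  then show "length (R_op k i (R_op k i z)) = length z" using pm_len by simp
  fix j assume "j < length (R_op k i (R_op k i z))"
  then have j: "j < k" by simp
  have "z ! i = 1 \<or> z ! i = -1" using pm_nth \<open>i < k\<close> \<open>z \<in> pm_vecs k\<close> by blast
  then show "R_op k i (R_op k i z) ! j = z ! j" using j \<open>i < k\<close> by (auto simp: R_nth)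
qed

lemma pm1_pow: "(a::int) = 1 \<or> a = -1 \<Longrightarrow> a ^ n = (if even n then 1 else a)"
  by (auto simp: power_minus1_even)

lemma Mrow_R_notin:
  assumes "i \<notin> S" "S \<subseteq> {..<k}"
  shows "M_row S (R_op k i z) = M_row S z * z ! i ^ card S"
proof -
  have "M_row S (R_op k i z) = (\<Prod>j\<in>S. z ! j * z ! i)" unfolding M_row_def
    by (rule prod.cong) (use assms in \<open>auto simp: R_nth\<close>)
  also have "\<dots> = (\<Prod>j\<in>S. z ! j) * (\<Prod>j\<in>S. z ! i)" by (rule prod.distrib)
  finally show ?thesis by (simp add: M_row_def)
qed

lemma Mrow_R_in:
  assumes "i \<in> S" "S \<subseteq> {..<k}"
  shows "M_row S (R_op k i z) = z ! i ^ card S * M_row (S - {i}) z"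
proof -
  have fin: "finite S" using assms(2) finite_subset by blast
  have "M_row S (R_op k i z) = R_op k i z ! i * M_row (S - {i}) (R_op k i z)"
    unfolding M_row_def using prod.remove[OF fin assms(1)] by blast
  also have "M_row (S - {i}) (R_op k i z) = M_row (S - {i}) z * z ! i ^ card (S - {i})"
    using Mrow_R_notin[of i "S - {i}" k z] assms by auto
  also have "card (S - {i}) = card S - 1" using fin assms by simp
  also have "R_op k i z ! i = z ! i" using assms by (auto simp: R_nth)
  finally have e: "M_row S (R_op k i z) = z ! i * (M_row (S - {i}) z * z ! i ^ (card S - 1))" .
  have "card S > 0" using fin assms(1) card_gt_0_iff by blast
  then have "card S = Suc (card S - 1)" by simp
  then have "z ! i ^ card S = z ! i * z ! i ^ (card S - 1)" by (metis power_Suc)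
  then show ?thesis using e by (simp add: algebra_simps)
qed

lemma Mrow_remove: "finite S \<Longrightarrow> i \<in> S \<Longrightarrow> M_row S z = z ! i * M_row (S - {i}) z"
  unfolding M_row_def by (rule prod.remove)

lemma ev_odd_pred: "even (n::nat) \<Longrightarrow> 1 \<le> n \<Longrightarrow> odd (n - 1)"
  by (cases n) auto

definition Rs :: "nat \<Rightarrow> nat set \<Rightarrow> nat set" where
  "Rs i S = (if i \<notin> S \<and> odd (card S) then insert i S else if i \<in> S \<and> even (card S) then S - {i} else S)"

lemma Rs_props:
  assumes t: "even t" and i: "i < k" and S: "S \<in> M_subsets k t"
  shows "Rs i S \<in> M_subsets k t" "Rs i (Rs i S) = S"
    "z \<in> pm_vecs k \<Longrightarrow> M_row (Rs i S) (R_op k i z) = M_row S z"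
proof -
  have Sk: "S \<subseteq> {..<k}" and c1: "1 \<le> card S" and ct: "card S \<le> t" using S by (auto simp: M_subsets_def)
  have fin: "finite S" using Sk finite_subset by blast
  show "Rs i S \<in> M_subsets k t"
  proof (cases "i \<notin> S \<and> odd (card S)")
    case True
    then have "card S \<noteq> t" using t by auto
    then show ?thesis using True Sk ct fin i by (auto simp: Rs_def M_subsets_def)
  next
    case False
    note F = False
    show ?thesis
    proof (cases "i \<in> S \<and> even (card S)")
      case True
      then have "card S \<noteq> 1" by auto
      then show ?thesis using True F Sk ct c1 fin by (auto simp: Rs_def M_subsets_def)
    next
      case False
      then show ?thesis using F S by (auto simp: Rs_def)
    qed
  qed
  show "Rs i (Rs i S) = S"
  proof (cases "i \<notin> S \<and> odd (card S)")
    case True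
    then show ?thesis using fin by (auto simp: Rs_def)
  next
    case False
    note F = False
    show ?thesis
    proof (cases "i \<in> S \<and> even (card S)")
      case True
      then have "card S \<noteq> 1" by auto
      have "i \<in> S" using True by blast
      have "odd (card (S - {i}))" using True fin c1
        using ev_odd_pred[of "card S"] card_Diff_singleton[OF \<open>i \<in> S\<close>] by auto
      moreover have "i \<notin> S - {i}" by simp
      ultimately show ?thesis using True fin by (simp add: Rs_def insert_absorb)
    next
      case False
      then show ?thesis using F by (auto simp: Rs_def)
    qed
  qed
  assume z: "z \<in> pm_vecs k"
  have a: "z ! i = 1 \<or> z ! i = -1" using pm_nth z i by blast
  have sq: "z ! i * z ! i = 1" using pm1_sq[OF a] .
  note pw = pm1_pow[OF a]
  show "M_row (Rs i S) (R_op k i z) = M_row S z"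
  proof (cases "i \<in> S")
    case True
    show ?thesis
    proof (cases "even (card S)")
      case True
      then have "card S \<noteq> 1" by auto
      then have o: "odd (card (S - {i}))" using True fin c1 \<open>i \<in> S\<close>
        using ev_odd_pred[of "card S"] card_Diff_singleton[OF \<open>i \<in> S\<close>] by auto
      have "M_row (Rs i S) (R_op k i z) = M_row (S - {i}) z * z ! i ^ card (S - {i})"
        using True \<open>i \<in> S\<close> Mrow_R_notin[of i "S - {i}" k z] Sk by (auto simp: Rs_def)
      also have "\<dots> = M_row (S - {i}) z * z ! i" using o pw by simp
      also have "\<dots> = M_row S z" using Mrow_remove[OF fin \<open>i \<in> S\<close>, of z] by simp
      finally show ?thesis .
    next
      case False
      have "M_row (Rs i S) (R_op k i z) = z ! i ^ card S * M_row (S - {i}) z"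
        using False \<open>i \<in> S\<close> Mrow_R_in[of i S k z] Sk by (auto simp: Rs_def)
      also have "\<dots> = M_row S z" using False pw Mrow_remove[OF fin \<open>i \<in> S\<close>, of z] by simp
      finally show ?thesis .
    qed
  next
    case False
    show ?thesis
    proof (cases "even (card S)")
      case True
      then show ?thesis using False Mrow_R_notin[of i S k z] Sk pw by (auto simp: Rs_def)
    next
      case odd: False
      have ins: "insert i S \<subseteq> {..<k}" using Sk i by auto
      have "M_row (Rs i S) (R_op k i z) = z ! i ^ card (insert i S) * M_row S z"
        using odd False Mrow_R_in[of i "insert i S" k z] ins by (auto simp: Rs_def)
      also have "card (insert i S) = Suc (card S)" using fin False by simp
      finally show ?thesis using odd pw sq by simp
    qed
  qed
qed

lemma R_gen:
  assumes t: "even t" and i: "i < k"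
  shows "bij_betw (R_op k i) (pm_vecs k) (pm_vecs k)"
    "sys_sym (pm_vecs k) (R_op k i) (ineq_rows k t) ineq_A ineq_b"
    "is_OA N k t X \<Longrightarrow> is_OA N k t (map (R_op k i) X) \<and> OD_equiv k X (map (R_op k i) X)"
proof -
  show "bij_betw (R_op k i) (pm_vecs k) (pm_vecs k)"
    by (rule bij_witness[where f'="R_op k i"]) (use R_pm R_invol i in auto)
  define \<rho> where "\<rho> = (\<lambda>(S::nat set, s::int). (Rs i S, s))"
  show "sys_sym (pm_vecs k) (R_op k i) (ineq_rows k t) ineq_A ineq_b"
    apply (rule sys_sym_inv[where \<rho>=\<rho> and \<rho>'=\<rho>])
    subgoal for r using Rs_props[OF t i] by (cases r) (auto simp: \<rho>_def ineq_rows_def)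
    subgoal for r using Rs_props[OF t i] by (cases r) (auto simp: \<rho>_def ineq_rows_def)
    subgoal for r using Rs_props[OF t i] by (cases r) (auto simp: \<rho>_def ineq_rows_def)
    subgoal for r using Rs_props[OF t i] by (cases r) (auto simp: \<rho>_def ineq_rows_def)
    subgoal by (simp add: ineq_b_def)
    subgoal for r z using Rs_props[OF t i] by (cases r) (auto simp: \<rho>_def ineq_rows_def ineq_A_def)
    done
  assume X: "is_OA N k t X"
  show "is_OA N k t (map (R_op k i) X) \<and> OD_equiv k X (map (R_op k i) X)"
  proof
    show "is_OA N k t (map (R_op k i) X)"
    proof (rule OA_map[OF X R_pm[OF i]])
      fix S u assume S: "S \<subseteq> {..<k}" "card S = t" and u: "u \<in> pm_vecs k"
      have ul: "length u = k" using pm_len u by blast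
      have ui: "u ! i = 1 \<or> u ! i = -1" using pm_nth u i by blast
      show "2 ^ t * length (filter (\<lambda>r. \<forall>j\<in>S. R_op k i r ! j = u ! j) X) = N"
      proof (cases "i \<in> S")
        case True
        have "length (filter (\<lambda>r. \<forall>j\<in>S. R_op k i r ! j = u ! j) X) = cnt X S (R_op k i u)"
          unfolding cnt_def
        proof (rule arg_cong[where f=length], rule filter_cong[OF refl])
          fix r assume r: "r \<in> set X"
          have rp: "r \<in> pm_vecs k" using OA_rows[OF X r] .
          have ri: "r ! i = 1 \<or> r ! i = -1" using pm_nth rp i by blast
          have A: "(R_op k i r ! i = u ! i) \<longleftrightarrow> r ! i = u ! i" using i by (simp add: R_nth)
          have B: "(r ! i = R_op k i u ! i) \<longleftrightarrow> r ! i = u ! i" using i by (simp add: R_nth)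
          have C: "(R_op k i r ! j = u ! j) \<longleftrightarrow> (r ! j = R_op k i u ! j)" if "r ! i = u ! i" "j \<in> S" for j
          proof -
            have jk: "j < k" using S that by auto
            have "r ! j * r ! i = u ! j \<longleftrightarrow> r ! j = u ! j * u ! i"
              using that(1) ui by auto
            then show ?thesis using jk by (simp add: R_nth)
          qed
          show "(\<forall>j\<in>S. R_op k i r ! j = u ! j) = (\<forall>j\<in>S. r ! j = R_op k i u ! j)"
            using A B C True by blast
        qed
        then show ?thesis using OA_cnt[OF X S R_pm[OF i u]] by simp
      next
        case False
        define T where "T = insert i S"
        have fin: "finite S" using S(1) finite_subset by blast
        have T: "T \<subseteq> {..<k}" "card T = t + 1" using S i False fin by (auto simp: T_def)
        define u1 where "u1 = u[i := 1]"
        define u2 where "u2 = (map uminus u)[i := -1]"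
        have u1: "u1 \<in> pm_vecs k" using u ul i unfolding pm_vecs_iff u1_def by (auto simp: nth_list_update)
        have u2: "u2 \<in> pm_vecs k" using u ul i unfolding pm_vecs_iff u2_def by (auto simp: nth_list_update)
        have split: "length (filter (\<lambda>r. \<forall>j\<in>S. R_op k i r ! j = u ! j) X) = cnt X T u1 + cnt X T u2"
          unfolding cnt_def
          apply (subst len_filter_split[where Q="\<lambda>r. r ! i = 1"])
          apply (rule arg_cong2[where f="(+)"])
          subgoal
          proof (rule arg_cong[where f=length], rule filter_cong[OF refl])
            fix r assume r: "r \<in> set X"
            show "((\<forall>j\<in>S. R_op k i r ! j = u ! j) \<and> r ! i = 1) = (\<forall>j\<in>T. r ! j = u1 ! j)"
              using S(1) False ul i by (auto simp: T_def u1_def R_nth subset_iff nth_list_update)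
          qed
          subgoal
          proof (rule arg_cong[where f=length], rule filter_cong[OF refl])
            fix r assume r: "r \<in> set X"
            have rp: "r \<in> pm_vecs k" using OA_rows[OF X r] .
            have ri: "r ! i = 1 \<or> r ! i = -1" using pm_nth rp i by blast
            show "((\<forall>j\<in>S. R_op k i r ! j = u ! j) \<and> r ! i \<noteq> 1) = (\<forall>j\<in>T. r ! j = u2 ! j)"
              using S(1) False ul i ri by (auto simp: T_def u2_def R_nth subset_iff nth_list_update)
          qed
          done
        have "\<forall>j\<in>T. u2 ! j = (if j \<in> T then - (u1 ! j) else u1 ! j)"
          using T(1) ul i by (auto simp: u1_def u2_def nth_list_update subset_iff)
        moreover have "odd (card T)" using T t by simp
        ultimately have "2 ^ t * (cnt X T u1 + cnt X T u2) = N"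
          using flip_parity[OF X T order_refl u1] u2 by blast
        then show ?thesis using split by simp
      qed
    qed
    show "OD_equiv k X (map (R_op k i) X)"
      unfolding OD_equiv_def
      apply (rule conjI, simp)
      apply (rule exI[of _ id], rule exI[of _ "transpose 0 (Suc i)"], rule exI[of _ "\<lambda>r. X ! r ! i"], rule exI[of _ "\<lambda>_. 1"])
      apply (intro conjI, simp)
      subgoal using i by (intro permutes_swap_id) auto
      subgoal using OA_rows[OF X] pm_nth i nth_mem by fastforce
      subgoal by simp
    proof (intro allI impI)
      fix r j assume r: "r < length X" and j: "j < Suc k"
      have rp: "X ! r \<in> pm_vecs k" using OA_rows[OF X] r nth_mem by blast
      have ri: "X ! r ! i = 1 \<or> X ! r ! i = -1" using pm_nth rp i by blast
      show "aug (map (R_op k i) X) ! r ! j = X ! r ! i * 1 * aug X ! id r ! transpose 0 (Suc i) j"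
        using r j ri i by (cases j) (auto simp: aug_nth R_nth transpose_def)
    qed
  qed
qed



definition good :: "nat \<Rightarrow> nat \<Rightarrow> nat \<Rightarrow> (int list \<Rightarrow> int list) \<Rightarrow> bool" where
  "good N k t g \<longleftrightarrow> bij_betw g (pm_vecs k) (pm_vecs k) \<and> sys_sym (pm_vecs k) g (ineq_rows k t) ineq_A ineq_b \<and>
     (\<forall>X. is_OA N k t X \<longrightarrow> is_OA N k t (map g X) \<and> OD_equiv k X (map g X))"

lemma good_gen:
  assumes "g \<in> gen_by gens" "\<And>h. h \<in> gens \<Longrightarrow> good N k t h"
  shows "good N k t g"
  using assms(1)
proof (induction g rule: gen_by.induct)
  case gen_id
  have "sys_sym (pm_vecs k) id (ineq_rows k t) ineq_A ineq_b"
    by (rule sys_sym_inv[where \<rho>=id and \<rho>'=id]) auto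
  then show ?case unfolding good_def using OD_refl by simp
next
  case (gen_comp g h)
  have g: "good N k t g" using assms(2) gen_comp(1) .
  have h: "good N k t h" using gen_comp(3) .
  have bij: "bij_betw (g \<circ> h) (pm_vecs k) (pm_vecs k)"
    using bij_betw_trans g h unfolding good_def by blast
  have sym: "sys_sym (pm_vecs k) (g \<circ> h) (ineq_rows k t) ineq_A ineq_b"
    by (rule sys_sym_comp) (use g h bij_betwE in \<open>auto simp: good_def\<close>)
  have "is_OA N k t (map (g \<circ> h) X) \<and> OD_equiv k X (map (g \<circ> h) X)" if X: "is_OA N k t X" for X
  proof -
    have 1: "is_OA N k t (map h X)" "OD_equiv k X (map h X)" using h X unfolding good_def by blast+
    have 2: "is_OA N k t (map g (map h X))" "OD_equiv k (map h X) (map g (map h X))"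
      using g 1(1) unfolding good_def by blast+
    show ?thesis using 2 OD_trans[OF 1(2) 2(2)] by simp
  qed
  then show ?case using bij sym unfolding good_def by blast
qed

lemma freq_map:
  assumes X: "is_OA N k t X" and g: "bij_betw g (pm_vecs k) (pm_vecs k)"
  shows "freq (map g X) = act k g (freq X)"
proof
  fix w
  have rows: "\<And>r. r \<in> set X \<Longrightarrow> r \<in> pm_vecs k" using OA_rows[OF X] .
  have inj: "inj_on g (pm_vecs k)" using g bij_betw_imp_inj_on by blast
  show "freq (map g X) w = act k g (freq X) w"
  proof (cases "w \<in> pm_vecs k")
    case True
    define z where "z = the_inv_into (pm_vecs k) g w"
    have wim: "w \<in> g ` pm_vecs k" using True g bij_betw_imp_surj_on by blast
    have z: "z \<in> pm_vecs k" "g z = w"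
      using the_inv_into_into[OF inj wim] f_the_inv_into_f[OF inj wim] unfolding z_def by auto
    have "g -` {w} \<inter> set_mset (mset X) = {z} \<inter> set X"
      using rows z inj by (auto dest: inj_onD)
    then have "freq (map g X) w = (\<Sum>y\<in>{z} \<inter> set X. count (mset X) y)"
      unfolding freq_def by (simp add: count_image_mset)
    also have "\<dots> = count (mset X) z" by (cases "z \<in> set X") auto
    finally show ?thesis using True unfolding act_def freq_def z_def by simp
  next
    case False
    have "w \<notin> set (map g X)" using False rows g bij_betwE by fastforce
    then show ?thesis using False unfolding act_def freq_def by (simp add: count_eq_zero_iff)
  qed
qed

lemma form_sym:
  assumes "good N k t g" shows "formulation_sym k t N g"
proof -
  have "sys_sym (pm_vecs k) g (UNIV :: unit set) eq_A (eq_b N)"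
    by (rule sys_sym_inv[where \<rho>=id and \<rho>'=id]) (auto simp: eq_A_def)
  then show ?thesis using assms unfolding formulation_sym_def good_def ilp_obj_def by blast
qed

theorem lemma9:
  fixes N k t :: nat and X :: "int list list"
  assumes "1 \<le> t" and "t + 1 \<le> k" and "is_OA N k t X"
  shows "(even t \<longrightarrow> (\<forall>g\<in>G_OD k. formulation_sym k t N g \<and>
            (\<exists>Y. is_OA N k t Y \<and> freq Y = act k g (freq X) \<and> OD_equiv k X Y)))
       \<and> (odd t \<longrightarrow> (\<forall>g\<in>G_iso k. formulation_sym k t N g \<and>
            (\<exists>Y. is_OA N k t Y \<and> freq Y = act k g (freq X) \<and> isomorphic_OA k X Y)))"
proof -
  have iso_good: "good N k t h" if "h \<in> G_iso_gens k" for h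
    using that cp_gen sc_gen unfolding G_iso_gens_def good_def by blast
  have P1: "formulation_sym k t N g \<and> (\<exists>Y. is_OA N k t Y \<and> freq Y = act k g (freq X) \<and> OD_equiv k X Y)"
    if t: "even t" and g: "g \<in> G_OD k" for g
  proof -
    have gens: "good N k t h" if "h \<in> G_OD_gens k" for h
      using that iso_good R_gen[OF t] unfolding G_OD_gens_def good_def by blast
    have gg: "good N k t g" using good_gen[OF g[unfolded G_OD_def] gens] .
    show ?thesis
      using form_sym[OF gg] gg assms(3) freq_map[OF assms(3)] unfolding good_def by blast
  qed
  have P2: "formulation_sym k t N g \<and> (\<exists>Y. is_OA N k t Y \<and> freq Y = act k g (freq X) \<and> isomorphic_OA k X Y)"
    if t: "odd t" and g: "g \<in> G_iso k" for g
  proof -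
    have gg: "good N k t g" using good_gen[OF g[unfolded G_iso_def] iso_good] .
    have "isomorphic_OA k X (map g X)" unfolding isomorphic_OA_def using g by auto
    then show ?thesis
      using form_sym[OF gg] gg assms(3) freq_map[OF assms(3)] unfolding good_def by blast
  qed
  show ?thesis using P1 P2 by blast
qed

end
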